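(* Let $n\ge3$ be odd and let $D\subseteq\{0,1,\dots,n-1\}$ with $|D|=2$. Then the unidirectional cycle $\overrightarrow{C_n}$ is $(\{0,1,\dots,n-1\}\setminus D)$-antimagic.
   Context: An oriented graph is a simple graph each of whose edges is given one direction. For vertices $u,v$, $d(u,v)$ is the length of a shortest directed path from $u$ to $v$ ($d(u,u)=0$). For a set $D$ of nonnegative integers, $N_D(v)=\{y : d(v,y)\in D\}$; for a bijection $f:V\to\{1,\dots,|V|\}$, $\omega_D(v)=\sum_{x\in N_D(v)}f(x)$ (empty sum $0$); $f$ is $D$-antimagic if distinct vertices have distinct $D$-weights, and the graph is $D$-antimagic if such an $f$ exists. The unidirectional cycle $\overrightarrow{C_n}$ ($n\ge3$) has vertices $v_1,\dots,v_n$ and arcs $(v_i,v_{i+1})$ for $1\le i\le n-1$ and $(v_n,v_1)$; $d(v_i,v_j)=(j-i)\bmod n$. *)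

theory Defs
  imports Main
begin

definition D_neigh :: "'a set \<Rightarrow> ('a \<Rightarrow> 'a \<Rightarrow> nat) \<Rightarrow> nat set \<Rightarrow> 'a \<Rightarrow> 'a set" where
  "D_neigh V d D v = {y \<in> V. d v y \<in> D}"

definition D_weight :: "'a set \<Rightarrow> ('a \<Rightarrow> 'a \<Rightarrow> nat) \<Rightarrow> nat set \<Rightarrow> ('a \<Rightarrow> nat) \<Rightarrow> 'a \<Rightarrow> nat" where
  "D_weight V d D f v = (\<Sum>x\<in>D_neigh V d D v. f x)"

definition D_antimagic_labeling :: "'a set \<Rightarrow> ('a \<Rightarrow> 'a \<Rightarrow> nat) \<Rightarrow> nat set \<Rightarrow> ('a \<Rightarrow> nat) \<Rightarrow> bool" where
  "D_antimagic_labeling V d D f \<longleftrightarrow>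
     bij_betw f V {1..card V} \<and> inj_on (D_weight V d D f) V"

definition D_antimagic :: "'a set \<Rightarrow> ('a \<Rightarrow> 'a \<Rightarrow> nat) \<Rightarrow> nat set \<Rightarrow> bool" where
  "D_antimagic V d D \<longleftrightarrow> (\<exists>f. D_antimagic_labeling V d D f)"

(* Unidirectional cycle C_n: vertex v_{i+1} is represented by i \<in> {0..<n},
   arcs i \<rightarrow> (i+1) mod n; distance d(v_i,v_j) = (j - i) mod n. *)

definition ucycle_verts :: "nat \<Rightarrow> nat set" where
  "ucycle_verts n = {0..<n}"

definition ucycle_dist :: "nat \<Rightarrow> nat \<Rightarrow> nat \<Rightarrow> nat" where
  "ucycle_dist n i j = nat ((int j - int i) mod int n)"

end

theory Submission
  imports Defs
begin

lemma modsum: "v < n \<Longrightarrow> a < (n::nat) \<Longrightarrow> (v+a) mod n = (if v+a<n then v+a else v+a-n)"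
  by (simp add: le_mod_geq)

lemma dist_eq: "v < n \<Longrightarrow> y < n \<Longrightarrow> ucycle_dist n v y = (if v \<le> y then y - v else y + n - v)"
proof -
  assume h: "v < n" "y < n"
  show ?thesis
  proof (cases "v \<le> y")
    case True
    then have "(int y - int v) mod int n = int y - int v" using h by (intro mod_pos_pos_trivial) auto
    then show ?thesis using True by (simp add: ucycle_dist_def)
  next
    case False
    have "(int y - int v) mod int n = (int y - int v + int n) mod int n" by simp
    also have "\<dots> = int y - int v + int n" using h False by (intro mod_pos_pos_trivial) auto
    finally have "(int y - int v) mod int n = int y - int v + int n" .
    then show ?thesis using False by (simp add: ucycle_dist_def)
  qed
qed

lemma key:
  assumes "odd n" "v < n" "w < n" "a < n" "b < (n::nat)"
    and E: "(v+a) mod n + (v+b) mod n = (w+a) mod n + (w+b) mod n"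
  shows "v = w"
proof -
  have "((v+a) mod n + (v+b) mod n) mod n = ((w+a) mod n + (w+b) mod n) mod n" using E by simp
  then have "(v+a+(v+b)) mod n = (w+a+(w+b)) mod n" by (simp only: mod_add_eq)
  then have "int (v+a+(v+b)) mod int n = int (w+a+(w+b)) mod int n" by (metis of_nat_mod)
  then have "int n dvd (int (v+a+(v+b)) - int (w+a+(w+b)))" by (simp only: mod_eq_dvd_iff)
  then have "int n dvd 2 * (int v - int w)" by (simp add: algebra_simps)
  moreover have "coprime (int n) 2" using assms(1) by simp
  ultimately have d: "int n dvd (int v - int w)" using coprime_dvd_mult_right_iff by blast
  have "\<bar>int v - int w\<bar> < int n" using assms(2,3) by linarith
  then have "int v - int w = 0" using d dvd_imp_le_int by (metis abs_of_nat dvd_abs_iff not_le)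
  then show ?thesis by simp
qed

lemma dist_iff: "v < n \<Longrightarrow> y < n \<Longrightarrow> c < n \<Longrightarrow> (ucycle_dist n v y = c) = (y = (v+c) mod n)"
  by (simp add: dist_eq modsum) arith

theorem mainTheorem16:
  fixes n :: nat and D :: "nat set"
  assumes "n \<ge> 3" and "odd n"
    and "D \<subseteq> {0..<n}" and "card D = 2"
  shows "D_antimagic (ucycle_verts n) (ucycle_dist n) ({0..<n} - D)"
proof -
  obtain a b where D: "D = {a,b}" "a \<noteq> b" using assms(4) card_2_iff by metis
  have ab: "a < n" "b < n" using assms(3) D by auto
  define V where "V = {0..<n}"
  define f where "f = (\<lambda>i::nat. i + 1)"
  define T where "T = (\<lambda>v. {(v+a) mod n, (v+b) mod n})"
  have dl: "ucycle_dist n v y < n" if "v < n" "y < n" for v y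
    using that by (auto simp: dist_eq)
  have TV: "T v \<subseteq> V" for v using assms(1) by (auto simp: T_def V_def)
  have Tset: "{y \<in> V. ucycle_dist n v y \<in> D} = T v" if "v < n" for v
  proof -
    have "ucycle_dist n v y \<in> D \<longleftrightarrow> y \<in> T v" if "y < n" for y
      using dist_iff[OF \<open>v < n\<close> that ab(1)] dist_iff[OF \<open>v < n\<close> that ab(2)]
      unfolding D(1) T_def by auto
    then show ?thesis using TV[of v] by (auto simp: V_def)
  qed
  have neigh: "D_neigh V (ucycle_dist n) ({0..<n} - D) v = V - T v" if "v < n" for v
  proof -
    have "D_neigh V (ucycle_dist n) ({0..<n} - D) v = V - {y \<in> V. ucycle_dist n v y \<in> D}"
      unfolding D_neigh_def using dl that by (auto simp: V_def)
    then show ?thesis using Tset that by simp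
  qed
  have sumT: "sum f (T v) = (v+a) mod n + (v+b) mod n + 2" if "v < n" for v
  proof -
    have "(v+a) mod n \<noteq> (v+b) mod n" using that ab D(2) by (auto simp: modsum split: if_splits)
    then show ?thesis by (simp add: T_def f_def)
  qed
  have w: "D_weight V (ucycle_dist n) ({0..<n} - D) f v = sum f V - sum f (T v)" if "v < n" for v
    unfolding D_weight_def neigh[OF that]
    by (rule sum_diff_nat) (use TV[of v] in \<open>auto simp: V_def T_def\<close>)
  have le: "sum f (T v) \<le> sum f V" for v
    by (rule sum_mono2) (use TV[of v] in \<open>auto simp: V_def T_def\<close>)
  have "bij_betw f V {1..card V}"
  proof -
    have "(\<lambda>i::nat. i+1) ` {0..<n} = {1..n}"
    proof
      show "{1..n} \<subseteq> (\<lambda>i::nat. i+1) ` {0..<n}"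
      proof
        fix x assume "x \<in> {1..n}"
        then show "x \<in> (\<lambda>i::nat. i+1) ` {0..<n}" by (intro image_eqI[where x="x - 1"]) auto
      qed
    qed auto
    then show ?thesis by (simp add: bij_betw_def inj_on_def V_def f_def)
  qed
  moreover have "inj_on (D_weight V (ucycle_dist n) ({0..<n} - D) f) V"
  proof (rule inj_onI)
    fix v w assume vw: "v \<in> V" "w \<in> V"
      and eq: "D_weight V (ucycle_dist n) ({0..<n} - D) f v = D_weight V (ucycle_dist n) ({0..<n} - D) f w"
    have "sum f (T v) = sum f (T w)" using eq w vw le[of v] le[of w] by (simp add: V_def)
    then have "(v+a) mod n + (v+b) mod n = (w+a) mod n + (w+b) mod n" using sumT vw by (simp add: V_def)
    then show "v = w" using key assms(2) vw ab by (auto simp: V_def)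
  qed
  ultimately show ?thesis
    unfolding D_antimagic_def D_antimagic_labeling_def ucycle_verts_def V_def by blast
qed

end
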